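(* Under the hypotheses of the preceding setting (random perfect matching $\mathbf M$ of two $n$-sets $V,W$; partitions $A_0,\dots,A_s$ of $V$ and $B_0,\dots,B_t$ of $W$ into nonempty parts with $s,t$ fixed, $a_i=|A_i|$, $b_j=|B_j|$; nonnegative integers $e_{ij}$ with $\sum_je_{ij}=a_i$, $\sum_ie_{ij}=b_j$; $\mu_{ij}=a_ib_j/n$, $e_{ij}=\mu_{ij}(1+\epsilon_{ij})$, $E_{ij}$ the number of edges of $\mathbf M$ between $A_i$ and $B_j$), there is a constant $C=C(s,t)$ such that \[\mathbb{P}\Big(\bigcap_{i,j}\{E_{ij}=e_{ij}\}\Big)\le C\Big(\prod_{1\le i\le s}a_i\prod_{1\le j\le t}b_j\Big)^{1/4}\exp\Big(-\sum_{i,j}\mu_{ij}\big[(1+\epsilon_{ij})\log(1+\epsilon_{ij})-\epsilon_{ij}\big]\Big),\] with the convention that the bracket equals $1$ when $\epsilon_{ij}=-1$.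
   Context: Logarithms are natural; $C$ does not depend on $n$ or on the sets. *)

theory Defs
  imports "HOL-Probability.Probability"
begin

definition perfect_matchings :: "'a set \<Rightarrow> 'b set \<Rightarrow> ('a \<Rightarrow> 'b) set" where
  "perfect_matchings V W = {f \<in> V \<rightarrow>\<^sub>E W. bij_betw f V W}"

definition indexed_partition :: "'a set \<Rightarrow> (nat \<Rightarrow> 'a set) \<Rightarrow> nat \<Rightarrow> bool" where
  "indexed_partition V A s \<longleftrightarrow>
     (\<forall>i\<le>s. A i \<noteq> {}) \<and> (\<forall>i\<le>s. \<forall>j\<le>s. i \<noteq> j \<longrightarrow> A i \<inter> A j = {}) \<and> (\<Union>i\<le>s. A i) = V"

definition edge_count :: "('a \<Rightarrow> 'b) \<Rightarrow> (nat \<Rightarrow> 'a set) \<Rightarrow> (nat \<Rightarrow> 'b set) \<Rightarrow> nat \<Rightarrow> nat \<Rightarrow> nat" where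
  "edge_count f A B i j = card {v \<in> A i. f v \<in> B j}"

definition matching_prob :: "'a set \<Rightarrow> 'b set \<Rightarrow> (nat \<Rightarrow> 'a set) \<Rightarrow> (nat \<Rightarrow> 'b set)
    \<Rightarrow> nat \<Rightarrow> nat \<Rightarrow> (nat \<Rightarrow> nat \<Rightarrow> nat) \<Rightarrow> real" where
  "matching_prob V W A B s t e =
     measure_pmf.prob (pmf_of_set (perfect_matchings V W))
       {f. \<forall>i\<le>s. \<forall>j\<le>t. edge_count f A B i j = e i j}"

definition bracket :: "real \<Rightarrow> real" where
  "bracket x = (if x = -1 then 1 else (1 + x) * ln (1 + x) - x)"

end

theory Submission
  imports Defs
begin


lemma PM_restrict:
  assumes f: "f \<in> perfect_matchings V W" and v: "v \<in> V" and fv: "f v = w"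
  shows "f(v:=undefined) \<in> perfect_matchings (V-{v}) (W-{w})"
proof -
  have fe: "f \<in> V \<rightarrow>\<^sub>E W" and b: "bij_betw f V W" using f by (auto simp: perfect_matchings_def)
  have b2: "bij_betw f (V-{v}) (W-{w})"
    using b v fv by (auto simp: bij_betw_def inj_on_def)
  have "bij_betw (f(v:=undefined)) (V-{v}) (W-{w})"
    using b2 by (rule bij_betw_cong[THEN iffD1, rotated]) auto
  moreover have "f(v:=undefined) \<in> (V-{v}) \<rightarrow>\<^sub>E (W-{w})"
    using fe b2 by (auto simp: PiE_def extensional_def bij_betw_def Pi_def)
  ultimately show ?thesis by (simp add: perfect_matchings_def)
qed

lemma PM_extend:
  assumes g: "g \<in> perfect_matchings (V-{v}) (W-{w})" and v: "v \<in> V" and w: "w \<in> W"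
  shows "g(v:=w) \<in> perfect_matchings V W"
proof -
  have ge: "g \<in> (V-{v}) \<rightarrow>\<^sub>E (W-{w})" and b: "bij_betw g (V-{v}) (W-{w})"
    using g by (auto simp: perfect_matchings_def)
  have "bij_betw (g(v:=w)) (V-{v}) (W-{w})"
    using b by (rule bij_betw_cong[THEN iffD1, rotated]) auto
  hence "bij_betw (g(v:=w)) ((V-{v}) \<union> {v}) ((W-{w}) \<union> {w})"
    by (rule bij_betw_combine) auto
  moreover have "(V-{v}) \<union> {v} = V" "(W-{w}) \<union> {w} = W" using v w by auto
  ultimately have "bij_betw (g(v:=w)) V W" by simp
  moreover have "g(v:=w) \<in> V \<rightarrow>\<^sub>E W"
    using ge w v by (auto simp: PiE_def extensional_def Pi_def)
  ultimately show ?thesis by (simp add: perfect_matchings_def)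
qed

lemma edge_count_restrict:
  assumes f: "f \<in> perfect_matchings V W" and fv: "f v = w"
    and dA: "disjoint_family_on A {..s}" and dB: "disjoint_family_on B {..t}"
    and AV: "\<And>i. i \<le> s \<Longrightarrow> A i \<subseteq> V" and finV: "finite V"
    and vA: "v \<in> A i0" and i0: "i0 \<le> s" and wB: "w \<in> B j0" and j0: "j0 \<le> t"
    and i: "i \<le> s" and j: "j \<le> t"
  shows "edge_count (f(v:=undefined)) (A(i0 := A i0 - {v})) (B(j0 := B j0 - {w})) i j
         = edge_count f A B i j - (if i = i0 \<and> j = j0 then 1 else 0)"
proof -
  have inj: "inj_on f V" using f by (auto simp: perfect_matchings_def bij_betw_def)
  have vV: "v \<in> V" using AV[OF i0] vA by auto
  have vAi: "v \<in> A i \<longleftrightarrow> i = i0" using dA vA i i0 by (auto simp: disjoint_family_on_def)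
  have wBj: "w \<in> B j \<longleftrightarrow> j = j0" using dB wB j j0 by (auto simp: disjoint_family_on_def)
  have eq: "{u \<in> (A(i0 := A i0 - {v})) i. (f(v:=undefined)) u \<in> (B(j0 := B j0 - {w})) j}
        = {u \<in> A i. f u \<in> B j} - {v}"
  proof (intro set_eqI iffI)
    fix u assume u: "u \<in> {u \<in> (A(i0 := A i0 - {v})) i. (f(v:=undefined)) u \<in> (B(j0 := B j0 - {w})) j}"
    hence uA: "u \<in> A i" and uv: "u \<noteq> v" using vAi by (auto split: if_splits)
    thus "u \<in> {u \<in> A i. f u \<in> B j} - {v}" using u by (auto split: if_splits)
  next
    fix u assume u: "u \<in> {u \<in> A i. f u \<in> B j} - {v}"
    hence uA: "u \<in> A i" and uv: "u \<noteq> v" and fu: "f u \<in> B j" by auto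
    have "u \<in> V" using AV[OF i] uA by auto
    hence "f u \<noteq> w" using inj vV uv fv by (auto simp: inj_on_def)
    thus "u \<in> {u \<in> (A(i0 := A i0 - {v})) i. (f(v:=undefined)) u \<in> (B(j0 := B j0 - {w})) j}"
      using uA uv fu by auto
  qed
  have "v \<in> {u \<in> A i. f u \<in> B j} \<longleftrightarrow> i = i0 \<and> j = j0" using vAi wBj fv by auto
  moreover have "finite {u \<in> A i. f u \<in> B j}"
    using AV[OF i] finV by (auto intro: finite_subset)
  ultimately show ?thesis unfolding edge_count_def eq by (simp add: card_Diff_singleton_if)
qed

definition cset :: "'a set \<Rightarrow> 'b set \<Rightarrow> (nat\<Rightarrow>'a set) \<Rightarrow> (nat\<Rightarrow>'b set) \<Rightarrow> nat \<Rightarrow> nat \<Rightarrow> (nat\<Rightarrow>nat\<Rightarrow>nat) \<Rightarrow> ('a\<Rightarrow>'b) set" where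
  "cset V W A B s t e = {f \<in> perfect_matchings V W. \<forall>i\<le>s. \<forall>j\<le>t. edge_count f A B i j = e i j}"

definition good :: "'a set \<Rightarrow> 'b set \<Rightarrow> (nat\<Rightarrow>'a set) \<Rightarrow> (nat\<Rightarrow>'b set) \<Rightarrow> nat \<Rightarrow> nat \<Rightarrow> (nat\<Rightarrow>nat\<Rightarrow>nat) \<Rightarrow> bool" where
  "good V W A B s t e \<longleftrightarrow> finite V \<and> finite W \<and> card V = card W \<and>
     disjoint_family_on A {..s} \<and> (\<Union>i\<le>s. A i) = V \<and>
     disjoint_family_on B {..t} \<and> (\<Union>j\<le>t. B j) = W \<and>
     (\<forall>i\<le>s. (\<Sum>j\<le>t. e i j) = card (A i)) \<and> (\<forall>j\<le>t. (\<Sum>i\<le>s. e i j) = card (B j))"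

lemma prod_upd_helper:
  fixes g h :: "'i \<Rightarrow> nat"
  assumes "finite S" "x \<in> S" "\<And>y. y \<in> S \<Longrightarrow> y \<noteq> x \<Longrightarrow> g y = h y"
  shows "h x * prod g S = g x * prod h S"
proof -
  have "prod g (S - {x}) = prod h (S - {x})" using assms(3) by (intro prod.cong) auto
  thus ?thesis using prod.remove[OF assms(1,2), of g] prod.remove[OF assms(1,2), of h] by simp
qed

lemma sum_upd_helper:
  fixes g h :: "'i \<Rightarrow> nat"
  assumes "finite S" "x \<in> S" "\<And>y. y \<in> S \<Longrightarrow> y \<noteq> x \<Longrightarrow> g y = h y" "h x = g x - 1" "g x \<ge> 1"
  shows "sum h S = sum g S - 1"
proof -
  have "sum g (S - {x}) = sum h (S - {x})" using assms(3) by (intro sum.cong) auto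
  thus ?thesis using sum.remove[OF assms(1,2), of g] sum.remove[OF assms(1,2), of h] assms(4,5) by simp
qed

lemma count_main:
  assumes "good V W A B s t e" "card V = n"
  shows "card (cset V W A B s t e) * (\<Prod>i\<le>s. \<Prod>j\<le>t. fact (e i j))
         = (\<Prod>i\<le>s. fact (card (A i))) * (\<Prod>j\<le>t. fact (card (B j)))"
  using assms
proof (induction n arbitrary: V W A B e)
  case 0
  note G = "0.prems"(1)[unfolded good_def]
  have V: "V = {}" using G "0.prems"(2) by auto
  have W: "W = {}" using G "0.prems"(2) by auto
  have Ae: "A i = {}" if "i \<le> s" for i using V G that by auto
  have Be: "B j = {}" if "j \<le> t" for j using W G that by auto
  have e0: "e i j = 0" if "i \<le> s" "j \<le> t" for i j
  proof -
    have "(\<Sum>j\<le>t. e i j) = 0" using G Ae that by auto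
    thus ?thesis using that by simp
  qed
  have pm: "perfect_matchings V W = {\<lambda>x. undefined}"
    unfolding V W perfect_matchings_def by (auto simp: bij_betw_def)
  have "cset V W A B s t e = {\<lambda>x. undefined}"
    unfolding cset_def pm using Ae e0 by (auto simp: edge_count_def)
  thus ?case using Ae Be e0 by simp
next
  case (Suc n)
  note G = Suc.prems(1)[unfolded good_def]
  have finV: "finite V" and finW: "finite W" and cVW: "card V = card W"
    and dA: "disjoint_family_on A {..s}" and UA: "(\<Union>i\<le>s. A i) = V"
    and dB: "disjoint_family_on B {..t}" and UB: "(\<Union>j\<le>t. B j) = W"
    and rs: "\<And>i. i \<le> s \<Longrightarrow> (\<Sum>j\<le>t. e i j) = card (A i)"
    and cs: "\<And>j. j \<le> t \<Longrightarrow> (\<Sum>i\<le>s. e i j) = card (B j)" using G by auto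
  have AV: "\<And>i. i \<le> s \<Longrightarrow> A i \<subseteq> V" using UA by auto
  have BW: "\<And>j. j \<le> t \<Longrightarrow> B j \<subseteq> W" using UB by auto
  have finA: "\<And>i. i \<le> s \<Longrightarrow> finite (A i)" using AV finV finite_subset by blast
  have finB: "\<And>j. j \<le> t \<Longrightarrow> finite (B j)" using BW finW finite_subset by blast
  obtain v where vV: "v \<in> V" using Suc.prems(2) by fastforce
  obtain i0 where i0: "i0 \<le> s" and vA: "v \<in> A i0" using vV UA by auto
  define a0 where "a0 = card (A i0)"
  have a0: "a0 \<ge> 1" using vA finA[OF i0] unfolding a0_def
    by (metis One_nat_def Suc_leI card_gt_0_iff empty_iff)
  define F where "F = (\<Prod>i\<le>s. \<Prod>j\<le>t. fact (e i j) :: nat)"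
  define PA where "PA = (\<Prod>i\<le>s. fact (card (A i)) :: nat)"
  define PB where "PB = (\<Prod>j\<le>t. fact (card (B j)) :: nat)"
  define X where "X = cset V W A B s t e"
  define Xw where "Xw = (\<lambda>w. {f \<in> X. f v = w})"
  have K: "a0 * card (B j0) * card (Xw w) * F = e i0 j0 * PA * PB"
    if j0: "j0 \<le> t" and wB: "w \<in> B j0" for j0 w
  proof (cases "e i0 j0 = 0")
    case True
    have "Xw w = {}"
    proof (rule ccontr)
      assume "Xw w \<noteq> {}"
      then obtain f where f: "f \<in> X" "f v = w" unfolding Xw_def by auto
      have "edge_count f A B i0 j0 = 0" using f i0 j0 True by (auto simp: X_def cset_def)
      moreover have "v \<in> {u \<in> A i0. f u \<in> B j0}" using vA f wB by auto
      moreover have "finite {u \<in> A i0. f u \<in> B j0}" using finA[OF i0] by auto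
      ultimately show False unfolding edge_count_def by auto
    qed
    thus ?thesis using True by simp
  next
    case False
    hence e1: "e i0 j0 \<ge> 1" by simp
    have wW: "w \<in> W" using BW[OF j0] wB by auto
    define A' where "A' = A(i0 := A i0 - {v})"
    define B' where "B' = B(j0 := B j0 - {w})"
    define e' where "e' = e(i0 := (e i0)(j0 := e i0 j0 - 1))"
    have e'_simp: "e' i j = (if i = i0 \<and> j = j0 then e i j - 1 else e i j)" for i j
      by (simp add: e'_def)
    have vAi: "v \<in> A i \<longleftrightarrow> i = i0" if "i \<le> s" for i
      using dA vA that i0 by (auto simp: disjoint_family_on_def)
    have wBj: "w \<in> B j \<longleftrightarrow> j = j0" if "j \<le> t" for j
      using dB wB that j0 by (auto simp: disjoint_family_on_def)
    have G': "good (V-{v}) (W-{w}) A' B' s t e'"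
      unfolding good_def
    proof (intro conjI allI impI)
      show "finite (V - {v})" "finite (W - {w})" using finV finW by auto
      show "card (V - {v}) = card (W - {w})" using cVW vV wW finV finW by simp
      show "disjoint_family_on A' {..s}" using dA unfolding A'_def disjoint_family_on_def by auto
      show "disjoint_family_on B' {..t}" using dB unfolding B'_def disjoint_family_on_def by auto
      show "(\<Union>i\<le>s. A' i) = V - {v}" unfolding A'_def using UA vAi i0 by (auto split: if_splits)
      show "(\<Union>j\<le>t. B' j) = W - {w}" unfolding B'_def using UB wBj j0 by (auto split: if_splits)
    next
      fix i assume i: "i \<le> s"
      show "(\<Sum>j\<le>t. e' i j) = card (A' i)"
      proof (cases "i = i0")
        case True
        have "(\<Sum>j\<le>t. e' i j) = (\<Sum>j\<le>t. e i j) - 1"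
          by (rule sum_upd_helper[where x=j0]) (use j0 e1 True in \<open>auto simp: e'_simp\<close>)
        thus ?thesis using rs[OF i] True vA finA[OF i0] by (simp add: A'_def)
      next
        case False
        thus ?thesis using rs[OF i] by (simp add: A'_def e'_simp)
      qed
    next
      fix j assume j: "j \<le> t"
      show "(\<Sum>i\<le>s. e' i j) = card (B' j)"
      proof (cases "j = j0")
        case True
        have "(\<Sum>i\<le>s. e' i j) = (\<Sum>i\<le>s. e i j) - 1"
          by (rule sum_upd_helper[where x=i0]) (use i0 e1 True in \<open>auto simp: e'_simp\<close>)
        thus ?thesis using cs[OF j] True wB finB[OF j0] by (simp add: B'_def)
      next
        case False
        thus ?thesis using cs[OF j] by (simp add: B'_def e'_simp)
      qed
    qed
    have cV': "card (V - {v}) = n" using Suc.prems(2) vV finV by simp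
    have IH: "card (cset (V-{v}) (W-{w}) A' B' s t e') * (\<Prod>i\<le>s. \<Prod>j\<le>t. fact (e' i j))
         = (\<Prod>i\<le>s. fact (card (A' i))) * (\<Prod>j\<le>t. fact (card (B' j)))"
      by (rule Suc.IH[OF G' cV'])
    have ecr: "edge_count (f(v:=undefined)) A' B' i j = edge_count f A B i j - (if i = i0 \<and> j = j0 then 1 else 0)"
      if "f \<in> perfect_matchings V W" "f v = w" "i \<le> s" "j \<le> t" for f i j
      unfolding A'_def B'_def
      by (rule edge_count_restrict[OF that(1,2) dA dB AV finV vA i0 wB j0 that(3,4)])
    have bij: "bij_betw (\<lambda>f. f(v:=undefined)) (Xw w) (cset (V-{v}) (W-{w}) A' B' s t e')"
    proof (rule bij_betw_imageI)
      show "inj_on (\<lambda>f. f(v:=undefined)) (Xw w)"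
      proof (rule inj_onI)
        fix f g assume "f \<in> Xw w" "g \<in> Xw w" "f(v:=undefined) = g(v:=undefined)"
        hence fv: "f v = w" and gv: "g v = w" and eq: "f(v:=undefined) = g(v:=undefined)" unfolding Xw_def by auto
        have "f = (f(v:=undefined))(v:=w)" by (simp add: fv[symmetric])
        also have "\<dots> = (g(v:=undefined))(v:=w)" using eq by simp
        also have "\<dots> = g" by (simp add: gv[symmetric])
        finally show "f = g" .
      qed
      show "(\<lambda>f. f(v:=undefined)) ` Xw w = cset (V-{v}) (W-{w}) A' B' s t e'"
      proof (intro set_eqI iffI)
        fix g assume "g \<in> (\<lambda>f. f(v:=undefined)) ` Xw w"
        then obtain f where f: "f \<in> X" "f v = w" and g: "g = f(v:=undefined)" unfolding Xw_def by auto
        have fP: "f \<in> perfect_matchings V W" and fe: "\<forall>i\<le>s. \<forall>j\<le>t. edge_count f A B i j = e i j"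
          using f by (auto simp: X_def cset_def)
        show "g \<in> cset (V-{v}) (W-{w}) A' B' s t e'"
          unfolding cset_def g using PM_restrict[OF fP vV f(2)] ecr[OF fP f(2)] fe
          by (auto simp: e'_simp)
      next
        fix g assume g: "g \<in> cset (V-{v}) (W-{w}) A' B' s t e'"
        have gP: "g \<in> perfect_matchings (V-{v}) (W-{w})" and ge: "\<forall>i\<le>s. \<forall>j\<le>t. edge_count g A' B' i j = e' i j"
          using g by (auto simp: cset_def)
        define f where "f = g(v:=w)"
        have fP: "f \<in> perfect_matchings V W" unfolding f_def by (rule PM_extend[OF gP vV wW])
        have fv: "f v = w" by (simp add: f_def)
        have gv: "g v = undefined" using gP by (auto simp: perfect_matchings_def PiE_def extensional_def)
        have gf: "g = f(v:=undefined)" unfolding f_def using gv by auto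
        have "edge_count f A B i j = e i j" if i: "i \<le> s" and j: "j \<le> t" for i j
        proof -
          have r: "e' i j = edge_count f A B i j - (if i = i0 \<and> j = j0 then 1 else 0)"
            using ecr[OF fP fv i j] ge i j gf by simp
          show ?thesis
          proof (cases "i = i0 \<and> j = j0")
            case True
            have "v \<in> {u \<in> A i. f u \<in> B j}" using True vA fv wB by auto
            moreover have "finite {u \<in> A i. f u \<in> B j}" using finA[OF i] by auto
            ultimately have "edge_count f A B i j \<ge> 1" unfolding edge_count_def
              by (metis One_nat_def Suc_leI card_gt_0_iff empty_iff)
            thus ?thesis using r True e1 by (simp add: e'_simp)
          next
            case False
            thus ?thesis using r by (auto simp: e'_simp)
          qed
        qed
        hence "f \<in> Xw w" using fP fv by (auto simp: Xw_def X_def cset_def)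
        thus "g \<in> (\<lambda>f. f(v:=undefined)) ` Xw w" using gf by blast
      qed
    qed
    have cXw: "card (Xw w) = card (cset (V-{v}) (W-{w}) A' B' s t e')"
      using bij_betw_same_card[OF bij] .
    define F' where "F' = (\<Prod>i\<le>s. \<Prod>j\<le>t. fact (e' i j) :: nat)"
    define PA' where "PA' = (\<Prod>i\<le>s. fact (card (A' i)) :: nat)"
    define PB' where "PB' = (\<Prod>j\<le>t. fact (card (B' j)) :: nat)"
    have inner: "fact (e' i0 j0) * (\<Prod>j\<le>t. fact (e i0 j)) = fact (e i0 j0) * (\<Prod>j\<le>t. fact (e' i0 j) :: nat)"
      by (rule prod_upd_helper[where x=j0 and g="\<lambda>j. fact (e i0 j)" and h="\<lambda>j. fact (e' i0 j)"]) (use j0 in \<open>auto simp: e'_simp\<close>)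
    have fe: "fact (e i0 j0) = e i0 j0 * fact (e' i0 j0)"
      using e1 by (simp add: e'_simp fact_reduce)
    have "fact (e' i0 j0) * (\<Prod>j\<le>t. fact (e i0 j)) = fact (e' i0 j0) * (e i0 j0 * (\<Prod>j\<le>t. fact (e' i0 j)))"
      using inner unfolding fe by (simp add: ac_simps)
    hence inner2: "(\<Prod>j\<le>t. fact (e i0 j)) = e i0 j0 * (\<Prod>j\<le>t. fact (e' i0 j) :: nat)"
      by (simp only: mult_left_cancel[OF fact_nonzero])
    have outer: "(\<Prod>j\<le>t. fact (e' i0 j)) * F = (\<Prod>j\<le>t. fact (e i0 j)) * F'"
      unfolding F_def F'_def
      by (rule prod_upd_helper[where x=i0 and g="\<lambda>i. \<Prod>j\<le>t. fact (e i j)" and h="\<lambda>i. \<Prod>j\<le>t. fact (e' i j)"]) (use i0 in \<open>auto simp: e'_simp\<close>)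
    have "(\<Prod>j\<le>t. fact (e' i0 j)) * F = (\<Prod>j\<le>t. fact (e' i0 j)) * (e i0 j0 * F')"
      using outer unfolding inner2 by (simp add: ac_simps)
    moreover have "(\<Prod>j\<le>t. fact (e' i0 j) :: nat) \<noteq> 0" by simp
    ultimately have FF: "F = e i0 j0 * F'" by simp
    have outA: "fact (card (A' i0)) * PA = fact (card (A i0)) * PA'"
      unfolding PA_def PA'_def by (rule prod_upd_helper[where x=i0 and g="\<lambda>i. fact (card (A i))" and h="\<lambda>i. fact (card (A' i))"]) (use i0 in \<open>auto simp: A'_def\<close>)
    have cA': "card (A' i0) = a0 - 1" using vA finA[OF i0] by (simp add: A'_def a0_def)
    have "fact (card (A i0)) = a0 * fact (card (A' i0))"
      unfolding cA' a0_def[symmetric] using a0 by (simp add: fact_reduce)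
    hence "fact (card (A' i0)) * PA = fact (card (A' i0)) * (a0 * PA')"
      using outA by (simp add: ac_simps)
    hence PAA: "PA = a0 * PA'" by (simp only: mult_left_cancel[OF fact_nonzero])
    have outB: "fact (card (B' j0)) * PB = fact (card (B j0)) * PB'"
      unfolding PB_def PB'_def by (rule prod_upd_helper[where x=j0 and g="\<lambda>j. fact (card (B j))" and h="\<lambda>j. fact (card (B' j))"]) (use j0 in \<open>auto simp: B'_def\<close>)
    have cB': "card (B' j0) = card (B j0) - 1" using wB finB[OF j0] by (simp add: B'_def)
    have b1: "card (B j0) \<ge> 1" using wB finB[OF j0] by (metis One_nat_def Suc_leI card_gt_0_iff empty_iff)
    have "fact (card (B j0)) = card (B j0) * fact (card (B' j0))"
      unfolding cB' using b1 by (simp add: fact_reduce)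
    hence "fact (card (B' j0)) * PB = fact (card (B' j0)) * (card (B j0) * PB')"
      using outB by (simp add: ac_simps)
    hence PBB: "PB = card (B j0) * PB'" by (simp only: mult_left_cancel[OF fact_nonzero])
    have IH': "card (Xw w) * F' = PA' * PB'" using IH cXw unfolding F'_def PA'_def PB'_def by simp
    have "a0 * card (B j0) * card (Xw w) * (e i0 j0 * F') = e i0 j0 * (a0 * card (B j0)) * (card (Xw w) * F')"
      by (simp add: ac_simps)
    also have "\<dots> = e i0 j0 * (a0 * PA') * (card (B j0) * PB')" unfolding IH' by (simp add: ac_simps)
    finally show ?thesis unfolding FF PAA PBB .
  qed
  have SJ: "a0 * (\<Sum>w\<in>B j. card (Xw w)) * F = e i0 j * PA * PB" if j: "j \<le> t" for j
  proof (cases "B j = {}")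
    case True
    have "e i0 j \<le> (\<Sum>i\<le>s. e i j)" by (rule member_le_sum) (use i0 in auto)
    hence "e i0 j = 0" using cs[OF j] True by simp
    thus ?thesis using True by simp
  next
    case False
    hence b: "card (B j) > 0" using finB[OF j] by (simp add: card_gt_0_iff)
    have "card (B j) * (a0 * (\<Sum>w\<in>B j. card (Xw w)) * F) = (\<Sum>w\<in>B j. a0 * card (B j) * card (Xw w) * F)"
      by (simp add: sum_distrib_left sum_distrib_right ac_simps)
    also have "\<dots> = (\<Sum>w\<in>B j. e i0 j * PA * PB)" using K[OF j] by (intro sum.cong) auto
    also have "\<dots> = card (B j) * (e i0 j * PA * PB)" by simp
    finally show ?thesis using b by simp
  qed
  have finX: "finite X"
  proof (rule finite_subset)
    show "X \<subseteq> V \<rightarrow>\<^sub>E W" by (auto simp: X_def cset_def perfect_matchings_def)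
    show "finite (V \<rightarrow>\<^sub>E W)" using finV finW by (rule finite_PiE)
  qed
  have XU: "X = (\<Union>w\<in>W. Xw w)"
  proof -
    have "f v \<in> W" if "f \<in> X" for f using that vV by (auto simp: X_def cset_def perfect_matchings_def)
    thus ?thesis by (auto simp: Xw_def)
  qed
  have "card X = (\<Sum>w\<in>W. card (Xw w))"
    unfolding XU by (rule card_UN_disjoint) (use finW finX in \<open>auto simp: Xw_def\<close>)
  also have "\<dots> = (\<Sum>j\<le>t. \<Sum>w\<in>B j. card (Xw w))"
    unfolding UB[symmetric] by (rule sum.UNION_disjoint) (use finB dB in \<open>auto simp: disjoint_family_on_def\<close>)
  finally have cX: "card X = (\<Sum>j\<le>t. \<Sum>w\<in>B j. card (Xw w))" .
  have "a0 * (card X * F) = (\<Sum>j\<le>t. a0 * (\<Sum>w\<in>B j. card (Xw w)) * F)"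
    unfolding cX by (simp add: sum_distrib_left sum_distrib_right ac_simps)
  also have "\<dots> = (\<Sum>j\<le>t. e i0 j * PA * PB)" using SJ by (intro sum.cong) auto
  also have "\<dots> = (\<Sum>j\<le>t. e i0 j) * PA * PB" by (simp add: sum_distrib_right)
  also have "\<dots> = a0 * (PA * PB)" using rs[OF i0] by (simp add: a0_def)
  finally have "card X * F = PA * PB" using a0 by simp
  thus ?case unfolding X_def F_def PA_def PB_def .
qed



lemma ln_lower_pade:
  fixes x :: real assumes "0 \<le> x" shows "2*x/(2+x) \<le> ln (1+x)"
proof -
  let ?f = "\<lambda>y::real. ln (1+y) - 2*y/(2+y)"
  have "?f 0 \<le> ?f x"
  proof (rule DERIV_nonneg_imp_nondecreasing[OF assms])
    fix y :: real assume y: "0 \<le> y" "y \<le> x"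
    have d: "DERIV ?f y :> (1/(1+y) - 4/(2+y)^2)"
      using y by (auto intro!: derivative_eq_intros simp: field_simps power2_eq_square)
    have "1/(1+y) - 4/(2+y)^2 = y^2/((1+y)*(2+y)^2)"
      proof -
      have "(1+y) > 0" "(2+y) > 0" using y by auto
      thus ?thesis by (simp add: divide_simps power2_eq_square) (simp add: algebra_simps)
    qed
    also have "\<dots> \<ge> 0" using y by simp
    finally show "\<exists>d. DERIV ?f y :> d \<and> 0 \<le> d" using d by blast
  qed
  thus ?thesis by simp
qed

lemma ln_upper_cubic:
  fixes x :: real assumes "0 \<le> x" shows "ln (1+x) \<le> x - x^2/2 + x^3/3"
proof -
  let ?f = "\<lambda>y::real. y - y^2/2 + y^3/3 - ln (1+y)"
  have "?f 0 \<le> ?f x"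
  proof (rule DERIV_nonneg_imp_nondecreasing[OF assms])
    fix y :: real assume y: "0 \<le> y" "y \<le> x"
    have d: "DERIV ?f y :> (1 - y + y^2 - 1/(1+y))"
      using y by (auto intro!: derivative_eq_intros simp: field_simps power2_eq_square)
    have "1 - y + y^2 - 1/(1+y) = y^3/(1+y)"
      using y by (simp add: field_simps power2_eq_square power3_eq_cube)
    also have "\<dots> \<ge> 0" using y by simp
    finally show "\<exists>d. DERIV ?f y :> d \<and> 0 \<le> d" using d by blast
  qed
  thus ?thesis by simp
qed

definition Lf :: "nat \<Rightarrow> real" where
  "Lf m = ln (fact m) - real m * ln (real m) + real m"

lemma Lf_0: "Lf 0 = 0" by (simp add: Lf_def)

lemma Lf_Suc: "Lf (Suc m) = Lf m + 1 - real m * (ln (real m + 1) - ln (real m))"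
proof -
  have "ln (fact (Suc m) :: real) = ln (real m + 1) + ln (fact m)"
    by (simp add: ln_mult add.commute)
  thus ?thesis by (simp add: Lf_def algebra_simps)
qed

lemma Lf_upper_pos: "m \<ge> 1 \<Longrightarrow> Lf m \<le> 1 + ln (real m) / 2"
proof (induction m rule: dec_induct)
  case base then show ?case by (simp add: Lf_def)
next
  case (step m)
  define x where "x = 1 / real m"
  have m: "real m \<ge> 1" using step by simp
  have x: "x > 0" using m by (simp add: x_def)
  have "1 + x = (real m + 1) / real m" using m by (simp add: x_def field_simps)
  hence d: "ln (real m + 1) - ln (real m) = ln (1 + x)"
    using m by (simp add: ln_div)
  have "2*x/(2+x) \<le> ln (1+x)" using ln_lower_pade x by simp
  moreover have "2*x/(2+x) = 2/(2*real m+1)" using m by (simp add: x_def field_simps)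
  ultimately have "2/(2*real m+1) \<le> ln (1+x)" by simp
  hence "2 \<le> (2*real m+1) * ln (1+x)" using m by (simp add: field_simps)
  hence "1 - real m * ln (1+x) \<le> ln (1+x) / 2" by (simp add: algebra_simps)
  thus ?case using step.IH d by (simp add: Lf_Suc add.commute)
qed

lemma Lf_upper: "Lf m \<le> 1 + ln (real m + 1) / 2"
proof (cases "m = 0")
  case True then show ?thesis by (simp add: Lf_0)
next
  case False
  hence "Lf m \<le> 1 + ln (real m) / 2" using Lf_upper_pos by simp
  also have "ln (real m) \<le> ln (real m + 1)" using False by simp
  finally show ?thesis by simp
qed

lemma Lf_lower_pos: "m \<ge> 1 \<Longrightarrow> ln (real m + 2) / 2 \<le> Lf m"
proof (induction m rule: dec_induct)
  case base
  have "ln (3::real) \<le> 3 - 1" by (rule ln_le_minus_one) simp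
  then show ?case by (simp add: Lf_def)
next
  case (step m)
  define x where "x = 1 / real m"
  have m: "real m \<ge> 1" using step by simp
  have x: "x > 0" using m by (simp add: x_def)
  have "1 + x = (real m + 1) / real m" using m by (simp add: x_def field_simps)
  hence d: "ln (real m + 1) - ln (real m) = ln (1 + x)"
    using m by (simp add: ln_div)
  have u: "ln (1+x) \<le> x - x^2/2 + x^3/3" using ln_upper_cubic x by simp
  have "real m * (x - x^2/2 + x^3/3) = 1 - 1/(2*real m) + 1/(3*real m^2)"
    using m by (simp add: x_def field_simps power2_eq_square power3_eq_cube)
  hence A: "real m * ln (1+x) \<le> 1 - 1/(2*real m) + 1/(3*real m^2)"
    using mult_left_mono[OF u, of "real m"] m by simp
  have "1 + 1/(real m + 2) = (real (Suc m) + 2) / (real m + 2)" using m by (simp add: field_simps)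
  hence "ln (real (Suc m) + 2) - ln (real m + 2) = ln (1 + 1/(real m + 2))"
    using m by (simp only: ln_div) simp
  also have "\<dots> \<le> 1/(real m + 2)" by (rule ln_add_one_self_le_self) simp
  finally have B: "ln (real (Suc m) + 2) - ln (real m + 2) \<le> 1/(real m + 2)" .
  have C: "1/(real m + 2) \<le> 2 * (1/(2*real m) - 1/(3*real m^2))"
    using m by (simp add: field_simps power2_eq_square)
  have E: "Lf (Suc m) = Lf m + 1 - real m * ln (1 + x)" using d by (simp add: Lf_Suc add.commute)
  show ?case unfolding E using step.IH A B C by argo
qed

lemma Lf_lower: "ln (real m + 1) / 2 \<le> Lf m"
proof (cases "m = 0")
  case True then show ?thesis by (simp add: Lf_0)
next
  case False
  have "ln (real m + 1) \<le> ln (real m + 2)" by simp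
  moreover have "ln (real m + 2) / 2 \<le> Lf m" using Lf_lower_pos False by simp
  ultimately show ?thesis by linarith
qed

lemma prod_one_plus_ge:
  fixes x :: "'i \<Rightarrow> real"
  assumes "finite J" "\<And>j. j \<in> J \<Longrightarrow> x j \<ge> 0"
  shows "1 + sum x J \<le> (\<Prod>j\<in>J. 1 + x j)"
  using assms
proof (induction J rule: finite_induct)
  case empty then show ?case by simp
next
  case (insert y J)
  have p: "(\<Prod>j\<in>J. 1 + x j) \<ge> 1 + sum x J" using insert by auto
  have xy: "x y \<ge> 0" using insert by auto
  have s0: "sum x J \<ge> 0" using insert by (auto intro: sum_nonneg)
  have "1 + sum x (insert y J) = 1 + x y + sum x J" using insert by simp
  also have "\<dots> \<le> (1 + x y) * (1 + sum x J)" using xy s0 by (simp add: algebra_simps)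
  also have "\<dots> \<le> (1 + x y) * (\<Prod>j\<in>J. 1 + x j)" using p xy by (intro mult_left_mono) auto
  finally show ?case using insert by simp
qed

lemma ln_sum_row:
  fixes e :: "nat \<Rightarrow> nat"
  shows "ln (real (\<Sum>j\<le>t. e j) + 1) \<le> (\<Sum>j\<le>t. ln (real (e j) + 1))"
proof -
  have "ln (real (\<Sum>j\<le>t. e j) + 1) = ln (1 + (\<Sum>j\<le>t. real (e j)))" by (simp add: add.commute)
  also have "\<dots> \<le> ln (\<Prod>j\<le>t. 1 + real (e j))"
    by (subst ln_le_cancel_iff) (auto intro!: prod_pos add_pos_nonneg sum_nonneg prod_one_plus_ge)
  also have "\<dots> = (\<Sum>j\<le>t. ln (1 + real (e j)))"
    by (rule ln_prod) (auto simp: add_nonneg_eq_0_iff)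
  finally show ?thesis by (simp add: add.commute)
qed

lemma sum_split0: "(\<Sum>i\<le>s. f i) = f 0 + (\<Sum>i=1..s. f i)" for f :: "nat \<Rightarrow> real"
proof -
  have "{..s} = insert 0 {1..s}" by auto
  thus ?thesis by simp
qed

lemma mu_bracket:
  fixes x a b n :: real
  assumes "x \<ge> 0" "a > 0" "b > 0" "n > 0"
  shows "(a*b/n) * bracket (x / (a*b/n) - 1) = x * ln x - x * ln a - x * ln b + x * ln n - x + a*b/n"
proof (cases "x = 0")
  case True then show ?thesis by (simp add: bracket_def)
next
  case False
  hence x: "x > 0" using assms by simp
  define m where "m = a*b/n"
  define q where "q = x / m"
  have m: "m > 0" using assms by (simp add: m_def)
  have q: "q > 0" using x m by (simp add: q_def)
  have mq: "m * q = x" using m by (simp add: q_def)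
  have ne: "q - 1 \<noteq> -1" using q by linarith
  have br: "bracket (q - 1) = q * ln q - (q - 1)" using ne by (simp add: bracket_def)
  have lnq: "ln q = ln x - ln a - ln b + ln n"
    using x assms by (simp add: q_def m_def ln_div ln_mult)
  have "m * bracket (q - 1) = (m * q) * ln q - m * q + m" by (simp add: br algebra_simps)
  also have "\<dots> = x * (ln x - ln a - ln b + ln n) - x + m" by (simp only: mq lnq)
  finally show ?thesis by (simp add: m_def[symmetric] q_def[symmetric] algebra_simps)
qed

lemma analytic:
  fixes a b :: "nat \<Rightarrow> nat" and e :: "nat\<Rightarrow>nat\<Rightarrow>nat" and n s t :: nat
  assumes apos: "\<And>i. i \<le> s \<Longrightarrow> a i \<ge> 1" and bpos: "\<And>j. j \<le> t \<Longrightarrow> b j \<ge> 1"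
   and rs: "\<And>i. i\<le>s \<Longrightarrow> (\<Sum>j\<le>t. e i j) = a i" and cs: "\<And>j. j\<le>t \<Longrightarrow> (\<Sum>i\<le>s. e i j) = b j"
   and sa: "(\<Sum>i\<le>s. a i) = n" and sb: "(\<Sum>j\<le>t. b j) = n"
  shows "(\<Prod>i\<le>s. fact (a i)) * (\<Prod>j\<le>t. fact (b j)) / (fact n * (\<Prod>i\<le>s. \<Prod>j\<le>t. fact (e i j))) 
     \<le> exp (real s + real t + 2 + (real s * ln 2 + real t * ln 2) / 4)
        * ((\<Prod>i=1..s. real (a i)) * (\<Prod>j=1..t. real (b j))) powr (1/4)
        * exp (- (\<Sum>i\<le>s. \<Sum>j\<le>t. (real (a i) * real (b j) / real n)
                 * bracket (real (e i j) / (real (a i) * real (b j) / real n) - 1)))"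
proof -
  define P where "P = (\<Prod>i\<le>s. fact (a i)) * (\<Prod>j\<le>t. fact (b j)) / (fact n * (\<Prod>i\<le>s. \<Prod>j\<le>t. fact (e i j)) :: real)"
  define S where "S = (\<Sum>i\<le>s. \<Sum>j\<le>t. (real (a i) * real (b j) / real n)
                 * bracket (real (e i j) / (real (a i) * real (b j) / real n) - 1))"
  define Pi where "Pi = (\<Prod>i=1..s. real (a i)) * (\<Prod>j=1..t. real (b j))"
  have a0n: "a 0 \<le> n" using sa[symmetric] by (simp add: member_le_sum)
  have b0n: "b 0 \<le> n" using sb[symmetric] by (simp add: member_le_sum)
  have n1: "n \<ge> 1" using apos[of 0] a0n by simp
  have rsr: "(\<Sum>j\<le>t. real (e i j)) = real (a i)" if "i \<le> s" for i
    using rs[OF that] by (metis of_nat_sum)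
  have csr: "(\<Sum>i\<le>s. real (e i j)) = real (b j)" if "j \<le> t" for j
    using cs[OF that] by (metis of_nat_sum)
  have sar: "(\<Sum>i\<le>s. real (a i)) = real n" using sa by (metis of_nat_sum)
  have sbr: "(\<Sum>j\<le>t. real (b j)) = real n" using sb by (metis of_nat_sum)
  have ser: "(\<Sum>i\<le>s. \<Sum>j\<le>t. real (e i j)) = real n" using rsr sar by simp
  have S1: "S = (\<Sum>i\<le>s. \<Sum>j\<le>t. real (e i j) * ln (real (e i j)) - real (e i j) * ln (real (a i))
       - real (e i j) * ln (real (b j)) + real (e i j) * ln (real n) - real (e i j) + real (a i) * real (b j) / real n)"
    unfolding S_def
  proof (rule sum.cong[OF refl], rule sum.cong[OF refl])
    fix i j assume i: "i \<in> {..s}" and j: "j \<in> {..t}"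
    show "real (a i) * real (b j) / real n * bracket (real (e i j) / (real (a i) * real (b j) / real n) - 1) =
       real (e i j) * ln (real (e i j)) - real (e i j) * ln (real (a i)) - real (e i j) * ln (real (b j)) +
       real (e i j) * ln (real n) - real (e i j) + real (a i) * real (b j) / real n"
      by (rule mu_bracket) (use apos[of i] bpos[of j] n1 i j in auto)
  qed
  have E1: "(\<Sum>i\<le>s. \<Sum>j\<le>t. real (e i j) * ln (real (a i))) = (\<Sum>i\<le>s. real (a i) * ln (real (a i)))"
    using rsr by (simp add: sum_distrib_right[symmetric])
  have E2: "(\<Sum>i\<le>s. \<Sum>j\<le>t. real (e i j) * ln (real (b j))) = (\<Sum>j\<le>t. real (b j) * ln (real (b j)))"
    using csr by (subst sum.swap) (simp add: sum_distrib_right[symmetric])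
  have E3: "(\<Sum>i\<le>s. \<Sum>j\<le>t. real (e i j) * ln (real n)) = real n * ln (real n)"
    using ser by (simp add: sum_distrib_right[symmetric])
  have E4: "(\<Sum>i\<le>s. \<Sum>j\<le>t. real (a i) * real (b j) / real n) = real n"
  proof -
    have "(\<Sum>i\<le>s. \<Sum>j\<le>t. real (a i) * real (b j) / real n) = (\<Sum>i\<le>s. real (a i) * (\<Sum>j\<le>t. real (b j)) / real n)"
      by (simp add: sum_distrib_left sum_divide_distrib)
    also have "\<dots> = (\<Sum>i\<le>s. real (a i))" using sbr n1 by simp
    finally show ?thesis using sar by simp
  qed
  have S2: "S = (\<Sum>i\<le>s. \<Sum>j\<le>t. real (e i j) * ln (real (e i j)))
     - (\<Sum>i\<le>s. real (a i) * ln (real (a i))) - (\<Sum>j\<le>t. real (b j) * ln (real (b j))) + real n * ln (real n)"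
    unfolding S1 using E1 E2 E3 E4 ser by (simp add: sum.distrib sum_subtractf)
  have Ppos: "P > 0" unfolding P_def by (intro divide_pos_pos mult_pos_pos prod_pos) auto
  have lnP: "ln P = (\<Sum>i\<le>s. ln (fact (a i))) + (\<Sum>j\<le>t. ln (fact (b j))) - ln (fact n)
      - (\<Sum>i\<le>s. \<Sum>j\<le>t. ln (fact (e i j)))"
    unfolding P_def
    by (simp add: ln_div ln_mult prod_pos ln_prod)
  have lf: "ln (fact m) = Lf m + real m * ln (real m) - real m" for m by (simp add: Lf_def)
  define LA where "LA = (\<Sum>i\<le>s. Lf (a i))"
  define LB where "LB = (\<Sum>j\<le>t. Lf (b j))"
  define LE where "LE = (\<Sum>i\<le>s. \<Sum>j\<le>t. Lf (e i j))"
  have key: "ln P + S = LA + LB - Lf n - LE"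
    unfolding lnP S2 lf LA_def LB_def LE_def using sar sbr ser
    by (simp add: sum.distrib sum_subtractf)
  have bA: "LA \<le> real s + 1 + (\<Sum>i\<le>s. ln (real (a i) + 1)) / 2"
  proof -
    have "LA \<le> (\<Sum>i\<le>s. 1 + ln (real (a i) + 1) / 2)" unfolding LA_def by (intro sum_mono Lf_upper)
    thus ?thesis by (simp add: sum.distrib sum_divide_distrib)
  qed
  have bB: "LB \<le> real t + 1 + (\<Sum>j\<le>t. ln (real (b j) + 1)) / 2"
  proof -
    have "LB \<le> (\<Sum>j\<le>t. 1 + ln (real (b j) + 1) / 2)" unfolding LB_def by (intro sum_mono Lf_upper)
    thus ?thesis by (simp add: sum.distrib sum_divide_distrib)
  qed
  have bN: "ln (real n + 1) / 2 \<le> Lf n" by (rule Lf_lower)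
  have bE: "(\<Sum>i\<le>s. \<Sum>j\<le>t. ln (real (e i j) + 1)) / 2 \<le> LE"
  proof -
    have "(\<Sum>i\<le>s. \<Sum>j\<le>t. ln (real (e i j) + 1) / 2) \<le> LE" unfolding LE_def
      by (intro sum_mono Lf_lower)
    thus ?thesis by (simp add: sum_divide_distrib)
  qed
  have rowE: "(\<Sum>i\<le>s. ln (real (a i) + 1)) \<le> (\<Sum>i\<le>s. \<Sum>j\<le>t. ln (real (e i j) + 1))"
  proof (rule sum_mono)
    fix i assume "i \<in> {..s}"
    thus "ln (real (a i) + 1) \<le> (\<Sum>j\<le>t. ln (real (e i j) + 1))"
      using ln_sum_row[where t=t and e="e i"] rs[of i] by simp
  qed
  have colE: "(\<Sum>j\<le>t. ln (real (b j) + 1)) \<le> (\<Sum>i\<le>s. \<Sum>j\<le>t. ln (real (e i j) + 1))"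
  proof -
    have "(\<Sum>j\<le>t. ln (real (b j) + 1)) \<le> (\<Sum>j\<le>t. \<Sum>i\<le>s. ln (real (e i j) + 1))"
    proof (rule sum_mono)
      fix j assume "j \<in> {..t}"
      thus "ln (real (b j) + 1) \<le> (\<Sum>i\<le>s. ln (real (e i j) + 1))"
        using ln_sum_row[where t=s and e="\<lambda>i. e i j"] cs[of j] by simp
    qed
    thus ?thesis by (subst sum.swap) simp
  qed
  have a0: "ln (real (a 0) + 1) \<le> ln (real n + 1)" using a0n by simp
  have b0: "ln (real (b 0) + 1) \<le> ln (real n + 1)" using b0n by simp
  have sA: "(\<Sum>i=1..s. ln (real (a i) + 1)) \<le> real s * ln 2 + (\<Sum>i=1..s. ln (real (a i)))"
  proof -
    have "(\<Sum>i=1..s. ln (real (a i) + 1)) \<le> (\<Sum>i=1..s. ln 2 + ln (real (a i)))"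
    proof (rule sum_mono)
      fix i assume i: "i \<in> {1..s}"
      hence ai: "real (a i) \<ge> 1" using apos[of i] by simp
      have "ln (real (a i) + 1) \<le> ln (2 * real (a i))" using ai by simp
      also have "\<dots> = ln 2 + ln (real (a i))" using ai by (simp add: ln_mult)
      finally show "ln (real (a i) + 1) \<le> ln 2 + ln (real (a i))" .
    qed
    thus ?thesis by (simp add: sum.distrib)
  qed
  have sB: "(\<Sum>j=1..t. ln (real (b j) + 1)) \<le> real t * ln 2 + (\<Sum>j=1..t. ln (real (b j)))"
  proof -
    have "(\<Sum>j=1..t. ln (real (b j) + 1)) \<le> (\<Sum>j=1..t. ln 2 + ln (real (b j)))"
    proof (rule sum_mono)
      fix j assume j: "j \<in> {1..t}"
      hence bj: "real (b j) \<ge> 1" using bpos[of j] by simp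
      have "ln (real (b j) + 1) \<le> ln (2 * real (b j))" using bj by simp
      also have "\<dots> = ln 2 + ln (real (b j))" using bj by (simp add: ln_mult)
      finally show "ln (real (b j) + 1) \<le> ln 2 + ln (real (b j))" .
    qed
    thus ?thesis by (simp add: sum.distrib)
  qed
  have ap: "real (a i) > 0" if "i \<in> {1..s}" for i using apos[of i] that by auto
  have bp: "real (b j) > 0" if "j \<in> {1..t}" for j using bpos[of j] that by auto
  have Pipos: "Pi > 0" unfolding Pi_def using ap bp by (intro mult_pos_pos prod_pos) auto
  have lnPi: "ln Pi = (\<Sum>i=1..s. ln (real (a i))) + (\<Sum>j=1..t. ln (real (b j)))"
  proof -
    have "ln Pi = ln (\<Prod>i=1..s. real (a i)) + ln (\<Prod>j=1..t. real (b j))"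
      unfolding Pi_def using ap bp by (intro ln_mult_pos) (auto intro!: prod_pos)
    also have "ln (\<Prod>i=1..s. real (a i)) = (\<Sum>i=1..s. ln (real (a i)))"
      using ap by (intro ln_prod) auto
    also have "ln (\<Prod>j=1..t. real (b j)) = (\<Sum>j=1..t. ln (real (b j)))"
      using bp by (intro ln_prod) auto
    finally show ?thesis .
  qed
  have splitA: "(\<Sum>i\<le>s. ln (real (a i) + 1)) = ln (real (a 0) + 1) + (\<Sum>i=1..s. ln (real (a i) + 1))"
    by (rule sum_split0)
  have splitB: "(\<Sum>j\<le>t. ln (real (b j) + 1)) = ln (real (b 0) + 1) + (\<Sum>j=1..t. ln (real (b j) + 1))"
    by (rule sum_split0)
  define K where "K = real s + real t + 2 + (real s * ln 2 + real t * ln 2) / 4"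
  have main: "ln P \<le> K + ln Pi / 4 - S"
    using key bA bB bN bE rowE colE a0 b0 sA sB lnPi splitA splitB unfolding K_def
    by argo
  have "P = exp (ln P)" using Ppos by simp
  also have "\<dots> \<le> exp (K + ln Pi / 4 - S)" using main by simp
  also have "\<dots> = exp K * Pi powr (1/4) * exp (- S)"
    using Pipos by (simp add: powr_def mult_exp_exp algebra_simps)
  finally show ?thesis unfolding P_def K_def Pi_def S_def .
qed


lemma sum_card_partition:
  fixes s :: nat
  assumes "finite V" "disjoint_family_on A {..s}" "(\<Union>i\<le>s. A i) = V"
  shows "(\<Sum>i\<le>s. card (A i)) = card V"
proof -
  have fA: "finite (A i)" if "i \<le> s" for i using assms(3) finite_subset[OF _ assms(1)] that by blast
  have "card (\<Union>i\<le>s. A i) = (\<Sum>i\<le>s. card (A i))"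
    by (rule card_UN_disjoint) (use assms(2) fA in \<open>auto simp: disjoint_family_on_def\<close>)
  thus ?thesis using assms(3) by simp
qed

lemma card_PM:
  assumes "finite V" "finite W" "card V = card W"
  shows "card (perfect_matchings V W) = fact (card V)"
proof -
  have g: "good V W (\<lambda>_. V) (\<lambda>_. W) 0 0 (\<lambda>_ _. card V)"
  proof -
    have z: "{..0::nat} = {0}" by auto
    show ?thesis using assms unfolding good_def z by (simp add: disjoint_family_on_def)
  qed
  have "cset V W (\<lambda>_. V) (\<lambda>_. W) 0 0 (\<lambda>_ _. card V) = perfect_matchings V W"
  proof -
    have "{v \<in> V. f v \<in> W} = V" if "f \<in> perfect_matchings V W" for f
      using that by (auto simp: perfect_matchings_def)
    thus ?thesis by (auto simp: cset_def edge_count_def)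
  qed
  with count_main[OF g refl] show ?thesis using assms(3) by simp
qed

theorem corollary4p2:
  fixes s t :: nat
  shows "\<exists>C::real. \<forall>(n::nat) (V::nat set) (W::nat set) (A::nat \<Rightarrow> nat set) (B::nat \<Rightarrow> nat set)
            (e::nat \<Rightarrow> nat \<Rightarrow> nat).
     finite V \<and> finite W \<and> card V = n \<and> card W = n \<and>
     indexed_partition V A s \<and> indexed_partition W B t \<and>
     (\<forall>i\<le>s. (\<Sum>j\<le>t. e i j) = card (A i)) \<and>
     (\<forall>j\<le>t. (\<Sum>i\<le>s. e i j) = card (B j)) \<longrightarrow>
     (let \<mu> = (\<lambda>i j. real (card (A i)) * real (card (B j)) / real n);
          \<epsilon> = (\<lambda>i j. real (e i j) / \<mu> i j - 1)
      in matching_prob V W A B s t e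
         \<le> C * ((\<Prod>i=1..s. real (card (A i))) * (\<Prod>j=1..t. real (card (B j)))) powr (1/4)
             * exp (- (\<Sum>i\<le>s. \<Sum>j\<le>t. \<mu> i j * bracket (\<epsilon> i j))))"
proof (intro exI allI impI)
  fix n V W A B e
  assume H: "finite V \<and> finite W \<and> card V = n \<and> card W = n \<and>
     indexed_partition V A s \<and> indexed_partition W B t \<and>
     (\<forall>i\<le>s. (\<Sum>j\<le>t. e i j) = card (A i)) \<and>
     (\<forall>j\<le>t. (\<Sum>i\<le>s. e i j) = card (B j))"
  hence finV: "finite V" and finW: "finite W" and cV: "card V = n" and cW: "card W = n"
    and pA: "indexed_partition V A s" and pB: "indexed_partition W B t"
    and rs: "\<And>i. i \<le> s \<Longrightarrow> (\<Sum>j\<le>t. e i j) = card (A i)"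
    and cs: "\<And>j. j \<le> t \<Longrightarrow> (\<Sum>i\<le>s. e i j) = card (B j)" by auto
  have neA: "\<And>i. i \<le> s \<Longrightarrow> A i \<noteq> {}" and dA: "disjoint_family_on A {..s}" and UA: "(\<Union>i\<le>s. A i) = V"
    using pA by (auto simp: indexed_partition_def disjoint_family_on_def)
  have neB: "\<And>j. j \<le> t \<Longrightarrow> B j \<noteq> {}" and dB: "disjoint_family_on B {..t}" and UB: "(\<Union>j\<le>t. B j) = W"
    using pB by (auto simp: indexed_partition_def disjoint_family_on_def)
  have g: "good V W A B s t e" unfolding good_def using finV finW cV cW dA UA dB UB rs cs by auto
  have cnt: "card (cset V W A B s t e) * (\<Prod>i\<le>s. \<Prod>j\<le>t. fact (e i j))
         = (\<Prod>i\<le>s. fact (card (A i))) * (\<Prod>j\<le>t. fact (card (B j)))"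
    by (rule count_main[OF g refl])
  have cPM: "card (perfect_matchings V W) = fact n" using card_PM[OF finV finW] cV cW by simp
  have finPM: "finite (perfect_matchings V W)"
  proof (rule finite_subset)
    show "perfect_matchings V W \<subseteq> V \<rightarrow>\<^sub>E W" by (auto simp: perfect_matchings_def)
    show "finite (V \<rightarrow>\<^sub>E W)" using finV finW by (rule finite_PiE)
  qed
  have nePM: "perfect_matchings V W \<noteq> {}"
  proof
    assume "perfect_matchings V W = {}"
    hence "card (perfect_matchings V W) = 0" by simp
    thus False using cPM by simp
  qed
  have mp: "matching_prob V W A B s t e = real (card (cset V W A B s t e)) / real (fact n)"
  proof -
    have "perfect_matchings V W \<inter> {f. \<forall>i\<le>s. \<forall>j\<le>t. edge_count f A B i j = e i j} = cset V W A B s t e"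
      by (auto simp: cset_def)
    thus ?thesis unfolding matching_prob_def
      using measure_pmf_of_set[OF nePM finPM] cPM by simp
  qed
  have mp2: "matching_prob V W A B s t e =
     (\<Prod>i\<le>s. fact (card (A i))) * (\<Prod>j\<le>t. fact (card (B j))) / (fact n * (\<Prod>i\<le>s. \<Prod>j\<le>t. fact (e i j)) :: real)"
  proof -
    have "real (card (cset V W A B s t e)) * (\<Prod>i\<le>s. \<Prod>j\<le>t. fact (e i j))
        = (\<Prod>i\<le>s. fact (card (A i))) * (\<Prod>j\<le>t. fact (card (B j)) :: real)"
      using arg_cong[OF cnt, of real] by (simp add: of_nat_prod)
    moreover have "(\<Prod>i\<le>s. \<Prod>j\<le>t. fact (e i j) :: real) \<noteq> 0" by simp
    ultimately show ?thesis unfolding mp by (simp add: field_simps)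
  qed
  have apos: "card (A i) \<ge> 1" if "i \<le> s" for i
    using neA[OF that] UA finV that by (metis One_nat_def Suc_leI UN_upper atMost_iff card_gt_0_iff finite_subset)
  have bpos: "card (B j) \<ge> 1" if "j \<le> t" for j
    using neB[OF that] UB finW that by (metis One_nat_def Suc_leI UN_upper atMost_iff card_gt_0_iff finite_subset)
  have sa: "(\<Sum>i\<le>s. card (A i)) = n" using sum_card_partition[OF finV dA UA] cV by simp
  have sb: "(\<Sum>j\<le>t. card (B j)) = n" using sum_card_partition[OF finW dB UB] cW by simp
  show "let \<mu> = (\<lambda>i j. real (card (A i)) * real (card (B j)) / real n);
          \<epsilon> = (\<lambda>i j. real (e i j) / \<mu> i j - 1)
      in matching_prob V W A B s t e
         \<le> exp (real s + real t + 2 + (real s * ln 2 + real t * ln 2) / 4) * ((\<Prod>i=1..s. real (card (A i))) * (\<Prod>j=1..t. real (card (B j)))) powr (1/4)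
             * exp (- (\<Sum>i\<le>s. \<Sum>j\<le>t. \<mu> i j * bracket (\<epsilon> i j)))"
    unfolding Let_def mp2
    by (rule analytic[where a="\<lambda>i. card (A i)" and b="\<lambda>j. card (B j)"]) (use apos bpos rs cs sa sb in auto)
qed

end
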